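(* Let $I=[x_1,x_N]$ with partition $x_1<\dots<x_N$, affine maps $u_i(x)=a_ix+b_i$ with $u_i(x_1)=x_i$, $u_i(x_N)=x_{i+1}$ ($i\in\mathbb{N}_{N-1}$), scaling functions $\alpha_i\in C(I)$ with $\|\alpha\|_\infty:=\max_i\|\alpha_i\|_\infty<1$, and $q\in(0,1]$. Equip $C(I)$ with the sup-norm. Then for every $n\in\mathbb{N}$ the operator $\mathcal{F}^{(q,\alpha)}_n:C(I)\to C(I)$, $\mathcal{F}^{(q,\alpha)}_n(f)=f^{(q,\alpha)}_n$, is linear and bounded.
   Context: For $q\in(0,1]$: $[k]_q=\frac{1-q^k}{1-q}$ ($q\neq1$), $[k]_1=k$, $[k]_q!=[k]_q\cdots[1]_q$, $[0]_q!=1$, $\binom{n}{k}_q=\frac{[n]_q!}{[k]_q![n-k]_q!}$. Quantum MKZ operator: $M_{n,q}f(x)=P_{n,q}(x)\sum_{k\ge0}\binom{n+k}{k}_q\left(\frac{x-x_1}{x_N-x_1}\right)^k f\!\left(x_1+(x_N-x_1)\frac{[k]_q}{[k+n]_q}\right)$ for $x_1\le x<x_N$, $M_{n,q}f(x_N)=f(x_N)$, with $P_{n,q}(x)=\prod_{j=0}^n(x_N-x_1-q^j(x-x_1))/(x_N-x_1)^{n+1}$. The quantum MKZ-fractal function $f^{(q,\alpha)}_n$ of $f\in C(I)$ is the unique $g\in C(I)$ with $g(u_i(x))=f(u_i(x))+\alpha_i(x)(g(x)-M_{n,q}f(x))$ for all $x\in I$, $i\in\mathbb{N}_{N-1}$.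 *)

theory Defs
  imports "HOL-Analysis.Analysis"
begin

definition qint :: "real \<Rightarrow> nat \<Rightarrow> real" where
  "qint q k = (if q = 1 then real k else (1 - q ^ k) / (1 - q))"

definition qfact :: "real \<Rightarrow> nat \<Rightarrow> real" where
  "qfact q k = (\<Prod>j\<in>{1..k}. qint q j)"

definition qbinom :: "real \<Rightarrow> nat \<Rightarrow> nat \<Rightarrow> real" where
  "qbinom q m k = qfact q m / (qfact q k * qfact q (m - k))"

definition qMKZ_P :: "real \<Rightarrow> real \<Rightarrow> real \<Rightarrow> nat \<Rightarrow> real \<Rightarrow> real" where
  "qMKZ_P x1 xN q n x =
     (\<Prod>j\<in>{0..n}. (xN - x1 - q ^ j * (x - x1))) / (xN - x1) ^ (n + 1)"

definition qMKZ :: "real \<Rightarrow> real \<Rightarrow> real \<Rightarrow> nat \<Rightarrow> (real \<Rightarrow> real) \<Rightarrow> real \<Rightarrow> real" where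
  "qMKZ x1 xN q n f x =
     (if x = xN then f xN
      else qMKZ_P x1 xN q n x *
        (\<Sum>k. qbinom q (n + k) k * ((x - x1) / (xN - x1)) ^ k *
               f (x1 + (xN - x1) * (qint q k / qint q (k + n)))))"

definition is_qMKZ_fractal ::
  "(nat \<Rightarrow> real) \<Rightarrow> nat \<Rightarrow> (nat \<Rightarrow> real \<Rightarrow> real) \<Rightarrow> (nat \<Rightarrow> real \<Rightarrow> real) \<Rightarrow> real \<Rightarrow> nat
     \<Rightarrow> (real \<Rightarrow> real) \<Rightarrow> (real \<Rightarrow> real) \<Rightarrow> bool" where
  "is_qMKZ_fractal xs N u \<alpha> q n f g \<longleftrightarrow>
     continuous_on {xs 1..xs N} g \<and> (\<forall>y. y \<notin> {xs 1..xs N} \<longrightarrow> g y = 0) \<and>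
     (\<forall>i\<in>{1..N-1}. \<forall>y\<in>{xs 1..xs N}.
        g (u i y) = f (u i y) + \<alpha> i y * (g y - qMKZ (xs 1) (xs N) q n f y))"

definition qMKZ_fractal ::
  "(nat \<Rightarrow> real) \<Rightarrow> nat \<Rightarrow> (nat \<Rightarrow> real \<Rightarrow> real) \<Rightarrow> (nat \<Rightarrow> real \<Rightarrow> real) \<Rightarrow> real \<Rightarrow> nat
     \<Rightarrow> (real \<Rightarrow> real) \<Rightarrow> (real \<Rightarrow> real)" where
  "qMKZ_fractal xs N u \<alpha> q n f = (THE g. is_qMKZ_fractal xs N u \<alpha> q n f g)"

end

theory Submission
  imports Defs "HOL-Real_Asymp.Real_Asymp"
begin

lemma qint_0[simp]: "qint q 0 = 0"
  by (simp add: qint_def)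

lemma qint_Suc: "qint q (Suc k) = 1 + q * qint q k"
  by (cases "q = 1") (auto simp: qint_def field_simps)

lemma qint_add: "qint q (a + b) = qint q a + q ^ a * qint q b"
  by (induction a) (auto simp: qint_Suc algebra_simps)

lemma qint_ge1: "0 < q \<Longrightarrow> 1 \<le> k \<Longrightarrow> qint q k \<ge> 1"
proof (induction k)
  case (Suc k)
  have "qint q k \<ge> 0" using Suc by (cases k) auto
  then show ?case using Suc.prems by (simp add: qint_Suc)
qed simp

lemma qint_nonneg: "0 < q \<Longrightarrow> qint q k \<ge> 0"
  using qint_ge1[of q k] by (cases k) auto

lemma qfact_Suc: "qfact q (Suc k) = qfact q k * qint q (Suc k)"
  by (simp add: qfact_def prod.nat_ivl_Suc')

lemma qfact_0[simp]: "qfact q 0 = 1"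
  by (simp add: qfact_def)

lemma qfact_pos: "0 < q \<Longrightarrow> qfact q k > 0"
  unfolding qfact_def using qint_ge1 by (intro prod_pos) fastforce

lemma qbinom_00: "0 < q \<Longrightarrow> qbinom q k k = 1"
  using qfact_pos[of q k] by (simp add: qbinom_def)

lemma qbinom_0: "0 < q \<Longrightarrow> qbinom q m 0 = 1"
  using qfact_pos[of q m] by (simp add: qbinom_def)

lemma qbinom_pascal:
  assumes q: "0 < q"
  shows "qbinom q (Suc m + Suc k) (Suc k) = qbinom q (Suc m + k) k + q ^ Suc k * qbinom q (m + Suc k) (Suc k)"
proof -
  define A where "A = qfact q (m + k + 1)"
  have A: "A > 0" using qfact_pos[OF q] by (simp add: A_def)
  have fk: "qfact q k > 0" "qfact q m > 0" using qfact_pos[OF q] by auto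
  have ik: "qint q (Suc k) > 0" "qint q (Suc m) > 0" using qint_ge1[OF q] by (auto intro: less_le_trans[of 0 1])
  have e1: "qbinom q (Suc m + Suc k) (Suc k) = A * qint q (m + k + 2) / (qfact q k * qint q (Suc k) * (qfact q m * qint q (Suc m)))"
    by (simp add: qbinom_def A_def qfact_Suc)
  have e2: "qbinom q (Suc m + k) k = A / (qfact q k * (qfact q m * qint q (Suc m)))"
    by (simp add: qbinom_def A_def qfact_Suc)
  have e3: "qbinom q (m + Suc k) (Suc k) = A / (qfact q k * qint q (Suc k) * qfact q m)"
    by (simp add: qbinom_def A_def qfact_Suc)
  have add: "qint q (m + k + 2) = qint q (Suc k) + q ^ Suc k * qint q (Suc m)"
    using qint_add[of q "Suc k" "Suc m"] by (simp add: add.commute)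
  show ?thesis unfolding e1 e2 e3 add using A fk ik
    by (simp add: field_simps)
qed

definition cc :: "real \<Rightarrow> nat \<Rightarrow> nat \<Rightarrow> real" where
  "cc q m k = qbinom q (m + k) k"

lemma cc_nonneg: "0 < q \<Longrightarrow> cc q m k \<ge> 0"
  unfolding cc_def qbinom_def using qfact_pos[of q] by (intro divide_nonneg_pos mult_pos_pos less_imp_le) auto

lemma cc_Suc_sum: "0 < q \<Longrightarrow> cc q (Suc m) k = (\<Sum>i\<le>k. q ^ i * cc q m i)"
proof (induction k)
  case 0 then show ?case by (simp add: cc_def qbinom_0)
next
  case (Suc k)
  have "cc q (Suc m) (Suc k) = cc q (Suc m) k + q ^ Suc k * cc q m (Suc k)"
    unfolding cc_def using qbinom_pascal[OF Suc.prems, of m k] by simp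
  then show ?case using Suc by simp
qed

lemma cc_sums:
  assumes q: "0 < q" "q \<le> 1"
  shows "0 \<le> t \<Longrightarrow> t < 1 \<Longrightarrow> (\<lambda>k. cc q m k * t ^ k) sums (1 / (\<Prod>j\<le>m. (1 - q ^ j * t)))"
proof (induction m arbitrary: t)
  case 0
  then show ?case using geometric_sums[of t] by (simp add: cc_def qbinom_00[OF q(1)])
next
  case (Suc m)
  have "q * t \<le> t" using mult_right_mono[of q 1 t] Suc.prems q by simp
  then have qt: "0 \<le> q * t" "q * t < 1" using Suc.prems q by auto
  have IH: "(\<lambda>k. cc q m k * (q * t) ^ k) sums (1 / (\<Prod>j\<le>m. (1 - q ^ j * (q * t))))"
    using Suc.IH[OF qt] .
  have G: "(\<lambda>k. t ^ k) sums (1 / (1 - t))" using geometric_sums[of t] Suc.prems by simp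
  have "(\<lambda>k. \<Sum>i\<le>k. (cc q m i * (q * t) ^ i) * t ^ (k - i)) sums
        ((\<Sum>k. cc q m k * (q * t) ^ k) * (\<Sum>k. t ^ k))"
    apply (rule Cauchy_product_sums)
    using IH G cc_nonneg[OF q(1)] qt Suc.prems by (auto simp: sums_iff)
  moreover have "(\<Sum>i\<le>k. (cc q m i * (q * t) ^ i) * t ^ (k - i)) = cc q (Suc m) k * t ^ k" for k
  proof -
    have "(\<Sum>i\<le>k. (cc q m i * (q * t) ^ i) * t ^ (k - i)) = (\<Sum>i\<le>k. (q ^ i * cc q m i) * t ^ k)"
    proof (rule sum.cong)
      fix i assume "i \<in> {..k}"
      then have "t ^ i * t ^ (k - i) = t ^ k" by (simp flip: power_add)
      then show "(cc q m i * (q * t) ^ i) * t ^ (k - i) = (q ^ i * cc q m i) * t ^ k"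
        by (simp add: power_mult_distrib algebra_simps)
    qed simp
    then show ?thesis by (simp add: cc_Suc_sum[OF q(1)] sum_distrib_right)
  qed
  moreover have "(\<Sum>k. cc q m k * (q * t) ^ k) * (\<Sum>k. t ^ k) = 1 / (\<Prod>j\<le>Suc m. (1 - q ^ j * t))"
  proof -
    have P: "(\<Prod>j\<le>Suc m. (1 - q ^ j * t)) = (1 - t) * (\<Prod>j\<le>m. (1 - q ^ j * (q * t)))"
      by (subst prod.atMost_Suc_shift) (simp add: algebra_simps del: prod.atMost_Suc)
    show ?thesis using IH G unfolding P by (simp add: sums_iff)
  qed
  ultimately show ?case by simp
qed


locale mkz =
  fixes x1 xN q :: real and n :: nat
  assumes lt: "x1 < xN" and q0: "0 < q" and q1: "q \<le> 1" and n1: "1 \<le> n"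
begin

definition "tt x = (x - x1) / (xN - x1)"
definition "nd k = x1 + (xN - x1) * (qint q k / qint q (k + n))"
definition "PP x = qMKZ_P x1 xN q n x"
definition "w x k = PP x * (cc q n k * tt x ^ k)"

lemma M_eq: "x \<noteq> xN \<Longrightarrow> qMKZ x1 xN q n f x = PP x * (\<Sum>k. cc q n k * tt x ^ k * f (nd k))"
  by (simp add: qMKZ_def cc_def tt_def nd_def PP_def)

lemma PP_eq: "PP x = (\<Prod>j\<le>n. 1 - q ^ j * tt x)"
proof -
  have L: "xN - x1 \<noteq> 0" using lt by simp
  have "(xN - x1) ^ (n + 1) = (\<Prod>j\<in>{0..n}. (xN - x1))" by simp
  then have "PP x = (\<Prod>j\<in>{0..n}. (xN - x1 - q ^ j * (x - x1))) / (\<Prod>j\<in>{0..n}. (xN - x1))"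
    by (simp add: PP_def qMKZ_P_def)
  also have "\<dots> = (\<Prod>j\<in>{0..n}. (xN - x1 - q ^ j * (x - x1)) / (xN - x1))"
    by (simp add: prod_dividef)
  also have "\<dots> = (\<Prod>j\<le>n. 1 - q ^ j * tt x)"
    unfolding atLeast0AtMost by (intro prod.cong refl) (use L in \<open>simp add: tt_def field_simps\<close>)
  finally show ?thesis .
qed

lemma qint_pos: "1 \<le> k \<Longrightarrow> qint q k > 0"
  using qint_ge1[OF q0, of k] by simp

lemma nd_ratio: "0 \<le> qint q k / qint q (k + n)" "qint q k / qint q (k + n) \<le> 1"
proof -
  have p: "qint q (k + n) > 0" using qint_pos n1 by simp
  have "qint q k \<le> qint q (k + n)" using qint_add[of q k n] qint_nonneg[OF q0, of n] q0 by simp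
  then show "qint q k / qint q (k + n) \<le> 1" using p by simp
  show "0 \<le> qint q k / qint q (k + n)" using p qint_nonneg[OF q0, of k] by simp
qed

lemma nd_in: "nd k \<in> {x1..xN}"
proof -
  have "(xN - x1) * (qint q k / qint q (k + n)) \<le> (xN - x1) * 1"
    using nd_ratio lt by (intro mult_left_mono) auto
  moreover have "0 \<le> (xN - x1) * (qint q k / qint q (k + n))" using nd_ratio(1)[of k] lt by (intro mult_nonneg_nonneg) auto
  ultimately show ?thesis by (simp add: nd_def)
qed

lemma nd_0: "nd 0 = x1" by (simp add: nd_def)

lemma tt_range: "x \<in> {x1..xN} \<Longrightarrow> x \<noteq> xN \<Longrightarrow> 0 \<le> tt x \<and> tt x < 1"
  using lt by (simp add: tt_def divide_simps)

lemma PP_pos: assumes "x \<in> {x1..xN}" "x \<noteq> xN" shows "PP x > 0"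
proof -
  have t: "0 \<le> tt x" "tt x < 1" using tt_range[OF assms] by auto
  have "q ^ j * tt x < 1" for j
  proof -
    have "q ^ j \<le> 1" using q0 q1 by (simp add: power_le_one)
    then have "q ^ j * tt x \<le> tt x" using t mult_right_mono[of "q^j" 1 "tt x"] by simp
    then show ?thesis using t by simp
  qed
  then show ?thesis unfolding PP_eq by (intro prod_pos) auto
qed

lemma cc_tt_sums: assumes "x \<in> {x1..xN}" "x \<noteq> xN"
  shows "(\<lambda>k. cc q n k * tt x ^ k) sums (1 / PP x)"
  using cc_sums[OF q0 q1, of "tt x" n] tt_range[OF assms] by (simp add: PP_eq)

lemma w_sums: assumes "x \<in> {x1..xN}" "x \<noteq> xN" shows "w x sums 1"
proof -
  have "w x = (\<lambda>k. PP x * (cc q n k * tt x ^ k))" by (simp add: w_def fun_eq_iff)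
  then show ?thesis using sums_mult[OF cc_tt_sums[OF assms], of "PP x"] PP_pos[OF assms] by simp
qed

lemma w_nonneg: assumes "x \<in> {x1..xN}" "x \<noteq> xN" shows "w x k \<ge> 0"
  using PP_pos[OF assms] tt_range[OF assms] cc_nonneg[OF q0] by (simp add: w_def)

lemma M_sums:
  assumes B: "\<forall>y\<in>{x1..xN}. \<bar>f y\<bar> \<le> B" and x: "x \<in> {x1..xN}" "x \<noteq> xN"
  shows "(\<lambda>k. w x k * f (nd k)) sums (qMKZ x1 xN q n f x)"
proof -
  have s: "summable (\<lambda>k. cc q n k * tt x ^ k * f (nd k))"
  proof (rule summable_comparison_test)
    show "\<exists>N. \<forall>k\<ge>N. norm (cc q n k * tt x ^ k * f (nd k)) \<le> B * (cc q n k * tt x ^ k)"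
    proof (intro exI allI impI)
      fix k
      have c0: "0 \<le> cc q n k" "0 \<le> tt x ^ k" using tt_range[OF x] cc_nonneg[OF q0] by auto
      have fb: "\<bar>f (nd k)\<bar> \<le> B" using B nd_in by blast
      have "norm (cc q n k * tt x ^ k * f (nd k)) = \<bar>f (nd k)\<bar> * (cc q n k * tt x ^ k)"
        using c0 by (simp add: abs_mult)
      also have "\<dots> \<le> B * (cc q n k * tt x ^ k)"
        by (rule mult_right_mono[OF fb]) (use c0 in simp)
      finally show "norm (cc q n k * tt x ^ k * f (nd k)) \<le> B * (cc q n k * tt x ^ k)" .
    qed
    show "summable (\<lambda>k. B * (cc q n k * tt x ^ k))"
      using cc_tt_sums[OF x] by (intro summable_mult) (auto simp: sums_iff)
  qed
  show ?thesis
    using sums_mult[OF s[unfolded summable_sums_iff] , of "PP x"] M_eq[OF x(2), of f]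
    by (simp add: w_def ac_simps)
qed

lemma bound_nonneg: fixes f :: "real \<Rightarrow> real" assumes "\<forall>y\<in>{x1..xN}. \<bar>f y\<bar> \<le> B" shows "0 \<le> B"
proof -
  have "\<bar>f x1\<bar> \<le> B" using assms lt by simp
  then show ?thesis by (rule order_trans[OF abs_ge_zero])
qed

lemma M_bound:
  assumes B: "\<forall>y\<in>{x1..xN}. \<bar>f y\<bar> \<le> B" and x: "x \<in> {x1..xN}"
  shows "\<bar>qMKZ x1 xN q n f x\<bar> \<le> B"
proof (cases "x = xN")
  case True then show ?thesis using B lt by (simp add: qMKZ_def)
next
  case False
  have S: "(\<lambda>k. w x k * f (nd k)) sums (qMKZ x1 xN q n f x)" using M_sums[OF B x False] .
  have W: "(\<lambda>k. w x k * B) sums B" using sums_mult2[OF w_sums[OF x False], of B] by simp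
  have le: "\<bar>w x k * f (nd k)\<bar> \<le> w x k * B" for k
    using w_nonneg[OF x False, of k] B nd_in[of k] by (simp add: abs_mult mult_left_mono)
  have "qMKZ x1 xN q n f x \<le> B" using sums_le[OF _ S W] le by (meson abs_le_D1)
  moreover have "- B \<le> qMKZ x1 xN q n f x" using sums_le[OF _ sums_minus[OF W] S] le
    by (metis abs_le_D2 minus_le_iff)
  ultimately show ?thesis by simp
qed

lemma M_x1: "qMKZ x1 xN q n f x1 = f x1"
proof -
  have "tt x1 = 0" by (simp add: tt_def)
  moreover have "PP x1 = 1" by (simp add: PP_eq tt_def)
  ultimately have "qMKZ x1 xN q n f x1 = (\<Sum>k. (cc q n k * f (nd k)) * 0 ^ k)"
    using M_eq[of x1 f] lt by (simp add: ac_simps)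
  also have "\<dots> = f x1" by (simp add: cc_def qbinom_0[OF q0] nd_0)
  finally show ?thesis .
qed

lemma M_xN: "qMKZ x1 xN q n f xN = f xN"
  by (simp add: qMKZ_def)

lemma M_add:
  assumes "\<forall>y\<in>{x1..xN}. \<bar>f y\<bar> \<le> B" "\<forall>y\<in>{x1..xN}. \<bar>g y\<bar> \<le> B'" and x: "x \<in> {x1..xN}"
  shows "qMKZ x1 xN q n (\<lambda>y. f y + g y) x = qMKZ x1 xN q n f x + qMKZ x1 xN q n g x"
proof (cases "x = xN")
  case True then show ?thesis by (simp add: qMKZ_def)
next
  case False
  have B: "\<forall>y\<in>{x1..xN}. \<bar>f y + g y\<bar> \<le> B + B'"
  proof
    fix y assume y: "y \<in> {x1..xN}"
    have "\<bar>f y + g y\<bar> \<le> \<bar>f y\<bar> + \<bar>g y\<bar>" by (rule abs_triangle_ineq)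
    then show "\<bar>f y + g y\<bar> \<le> B + B'" using assms(1,2) y by fastforce
  qed
  have "(\<lambda>k. w x k * f (nd k) + w x k * g (nd k)) sums (qMKZ x1 xN q n f x + qMKZ x1 xN q n g x)"
    by (rule sums_add[OF M_sums[OF assms(1) x False] M_sums[OF assms(2) x False]])
  moreover have "(\<lambda>k. w x k * (f (nd k) + g (nd k))) sums (qMKZ x1 xN q n (\<lambda>y. f y + g y) x)"
    using M_sums[OF B x False] by simp
  ultimately show ?thesis by (simp add: distrib_left sums_unique2)
qed

lemma M_cmult:
  assumes "\<forall>y\<in>{x1..xN}. \<bar>f y\<bar> \<le> B" and x: "x \<in> {x1..xN}"
  shows "qMKZ x1 xN q n (\<lambda>y. c * f y) x = c * qMKZ x1 xN q n f x"
proof (cases "x = xN")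
  case True then show ?thesis by (simp add: qMKZ_def)
next
  case False
  have B: "\<forall>y\<in>{x1..xN}. \<bar>c * f y\<bar> \<le> \<bar>c\<bar> * B" using assms by (simp add: abs_mult mult_left_mono)
  have "(\<lambda>k. c * (w x k * f (nd k))) sums (c * qMKZ x1 xN q n f x)"
    by (rule sums_mult[OF M_sums[OF assms(1) x False]])
  moreover have "(\<lambda>k. w x k * (c * f (nd k))) sums (qMKZ x1 xN q n (\<lambda>y. c * f y) x)"
    using M_sums[OF B x False] by simp
  ultimately show ?thesis by (simp add: ac_simps sums_unique2)
qed

lemma ratio_lim: "(\<lambda>k. qint q k / qint q (k + n)) \<longlonglongrightarrow> 1"
proof (cases "q = 1")
  case True
  have "(\<lambda>k. real k / real (k + n)) \<longlonglongrightarrow> 1" by real_asymp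
  then show ?thesis using True by (simp add: qint_def)
next
  case False
  have q': "norm q < 1" using q0 q1 False by simp
  have "(\<lambda>k. (1 - q ^ k) / (1 - q ^ k * q ^ n)) \<longlonglongrightarrow> (1 - 0) / (1 - 0 * q ^ n)"
    by (intro tendsto_intros LIMSEQ_power_zero q') simp
  moreover have "qint q k / qint q (k + n) = (1 - q ^ k) / (1 - q ^ k * q ^ n)" for k
    using False by (simp add: qint_def power_add)
  ultimately show ?thesis by simp
qed

lemma nd_lim: "nd \<longlonglongrightarrow> xN"
proof -
  have "(\<lambda>k. x1 + (xN - x1) * (qint q k / qint q (k + n))) \<longlonglongrightarrow> x1 + (xN - x1) * 1"
    by (intro tendsto_intros ratio_lim)
  then show ?thesis by (simp add: nd_def[abs_def])
qed

lemma M_cont: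
  assumes f: "continuous_on {x1..xN} f"
  shows "continuous_on {x1..xN} (qMKZ x1 xN q n f)"
proof -
  obtain B where B: "\<forall>y\<in>{x1..xN}. \<bar>f y\<bar> \<le> B"
    using compact_imp_bounded[OF compact_continuous_image[OF f compact_Icc]]
    by (auto simp: bounded_iff)
  have B0: "0 \<le> B" using bound_nonneg[OF B] .
  have "continuous (at x within {x1..xN}) (qMKZ x1 xN q n f)" if x: "x \<in> {x1..xN}" for x
  proof (cases "x = xN")
    case False
    then have xl: "x < xN" using x by simp
    define K where "K = (tt x + 1) / 2"
    have t: "0 \<le> tt x" "tt x < 1" using tt_range[OF x False] by auto
    have K: "tt x < K" "K < 1" "0 \<le> K" using t by (auto simp: K_def)
    have Kx: "K \<in> {x1..xN}" "K \<noteq> xN" if "False" using that by auto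
    define S where "S s = (\<Sum>k. (cc q n k * f (nd k)) * s ^ k)" for s
    have sumK: "summable (\<lambda>k. (cc q n k * f (nd k)) * K ^ k)"
    proof (rule summable_comparison_test)
      show "\<exists>N. \<forall>k\<ge>N. norm (cc q n k * f (nd k) * K ^ k) \<le> B * (cc q n k * K ^ k)"
      proof (intro exI allI impI)
        fix k
        have c0: "0 \<le> cc q n k" "0 \<le> K ^ k" using K cc_nonneg[OF q0] by auto
        have fb: "\<bar>f (nd k)\<bar> \<le> B" using B nd_in by blast
        have "norm (cc q n k * f (nd k) * K ^ k) = \<bar>f (nd k)\<bar> * (cc q n k * K ^ k)"
          using c0 by (simp add: abs_mult)
        also have "\<dots> \<le> B * (cc q n k * K ^ k)"
          by (rule mult_right_mono[OF fb]) (use c0 in simp)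
        finally show "norm (cc q n k * f (nd k) * K ^ k) \<le> B * (cc q n k * K ^ k)" .
      qed
      show "summable (\<lambda>k. B * (cc q n k * K ^ k))"
        using cc_sums[OF q0 q1 K(3) K(2), of n] by (intro summable_mult) (auto simp: sums_iff)
    qed
    have cS: "isCont S (tt x)" unfolding S_def
      by (rule isCont_powser[OF sumK]) (use K t in simp)
    have ctt: "isCont tt x" unfolding tt_def[abs_def] using lt by (intro continuous_intros) auto
    have cP: "isCont PP x" unfolding PP_eq[abs_def] tt_def using lt by (intro continuous_intros) auto
    have "isCont (\<lambda>y. PP y * S (tt y)) x"
      by (intro continuous_intros cP isCont_o2[OF ctt cS])
    then have "continuous (at x within {x1..xN}) (\<lambda>y. PP y * S (tt y))"
      by (rule continuous_at_imp_continuous_within)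
    then show ?thesis
    proof (rule continuous_transform_within[of _ _ _ "xN - x"])
      show "0 < xN - x" using xl by simp
      show "x \<in> {x1..xN}" by fact
      fix y assume y: "y \<in> {x1..xN}" "dist y x < xN - x"
      then have "y \<noteq> xN" by (auto simp: dist_real_def)
      then show "PP y * S (tt y) = qMKZ x1 xN q n f y" by (simp add: M_eq S_def ac_simps)
    qed
  next
    case True
    have "(qMKZ x1 xN q n f \<longlongrightarrow> f xN) (at xN within {x1..xN})"
      unfolding Lim_within
    proof (intro allI impI)
      fix e :: real assume e: "e > 0"
      obtain \<delta> where \<delta>: "\<delta> > 0" "\<forall>y\<in>{x1..xN}. dist y xN < \<delta> \<longrightarrow> dist (f y) (f xN) < e / 2"
        using f e lt unfolding continuous_on_iff by (metis atLeastAtMost_iff half_gt_zero order_refl less_imp_le)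
      obtain K where K: "\<forall>k\<ge>K. dist (nd k) xN < \<delta>"
        using nd_lim \<delta>(1) unfolding lim_sequentially by blast
      define Q where "Q y = PP y * (\<Sum>k<K. cc q n k * tt y ^ k)" for y
      have cQ: "isCont Q xN" unfolding Q_def PP_eq[abs_def] tt_def using lt by (intro continuous_intros) auto
      have Q0: "Q xN = 0"
      proof -
        have "PP xN = 0" unfolding PP_eq using lt
          by (intro prod_zero bexI[of _ 0]) (auto simp: tt_def)
        then show ?thesis by (simp add: Q_def)
      qed
      define r where "r = e / (2 * (2 * B + 1))"
      have r: "r > 0" using e B0 by (simp add: r_def)
      obtain d where d: "d > 0" "\<forall>y. y \<noteq> xN \<and> norm (y - xN) < d \<longrightarrow> norm (Q y - 0) < r"
        using LIM_D[OF cQ[unfolded isCont_def Q0] r] by blast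
      show "\<exists>d>0. \<forall>y\<in>{x1..xN}. 0 < dist y xN \<and> dist y xN < d \<longrightarrow> dist (qMKZ x1 xN q n f y) (f xN) < e"
      proof (intro exI conjI ballI impI)
        show "d > 0" by fact
        fix y assume y: "y \<in> {x1..xN}" "0 < dist y xN \<and> dist y xN < d"
        then have yN: "y \<noteq> xN" by auto
        have Qy: "\<bar>Q y\<bar> < r" using d(2) y yN by (auto simp: dist_real_def)
        have S1: "(\<lambda>k. w y k * f (nd k) - w y k * f xN) sums (qMKZ x1 xN q n f y - 1 * f xN)"
          by (intro sums_diff M_sums[OF B y(1) yN] sums_mult2 w_sums[OF y(1) yN])
        define b where "b k = (if k < K then w y k * (2 * B) else 0) + w y k * (e / 2)" for k
        have bs: "b sums ((\<Sum>k<K. w y k * (2 * B)) + 1 * (e / 2))"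
        proof -
          have fs: "(\<lambda>k. if k < K then w y k * (2 * B) else 0) sums (\<Sum>k<K. w y k * (2 * B))"
            using sums_finite[of "{..<K}" "\<lambda>k. if k < K then w y k * (2 * B) else 0"] by simp
          show ?thesis unfolding b_def[abs_def]
            by (intro sums_add fs sums_mult2 w_sums[OF y(1) yN])
        qed
        have ab: "\<bar>w y k * f (nd k) - w y k * f xN\<bar> \<le> b k" for k
        proof -
          have w0: "w y k \<ge> 0" by (rule w_nonneg[OF y(1) yN])
          have eq: "\<bar>w y k * f (nd k) - w y k * f xN\<bar> = w y k * \<bar>f (nd k) - f xN\<bar>"
            using w0 by (simp add: abs_mult right_diff_distrib[symmetric])
          have "\<bar>f (nd k) - f xN\<bar> \<le> (if k < K then 2 * B else 0) + e / 2"
          proof (cases "k < K")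
            case True
            have "\<bar>f (nd k)\<bar> \<le> B" "\<bar>f xN\<bar> \<le> B" using B nd_in lt by auto
            moreover have "\<bar>f (nd k) - f xN\<bar> \<le> \<bar>f (nd k)\<bar> + \<bar>f xN\<bar>" by (rule abs_triangle_ineq4)
            ultimately show ?thesis using True e by simp
          next
            case False
            then have "dist (f (nd k)) (f xN) < e / 2" using K \<delta>(2) nd_in by auto
            then show ?thesis using False by (simp add: dist_real_def)
          qed
          then have "w y k * \<bar>f (nd k) - f xN\<bar> \<le> w y k * ((if k < K then 2 * B else 0) + e / 2)"
            using w0 by (intro mult_left_mono)
          then show ?thesis unfolding eq b_def by (cases "k < K") (simp_all add: algebra_simps)
        qed
        have le1: "qMKZ x1 xN q n f y - 1 * f xN \<le> (\<Sum>k<K. w y k * (2 * B)) + 1 * (e / 2)"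
          by (rule sums_le[OF _ S1 bs]) (use ab abs_le_D1 in blast)
        have le2: "- ((\<Sum>k<K. w y k * (2 * B)) + 1 * (e / 2)) \<le> qMKZ x1 xN q n f y - 1 * f xN"
          by (rule sums_le[OF _ sums_minus[OF bs] S1]) (use ab in \<open>metis abs_le_D2 minus_le_iff\<close>)
        have sQ: "(\<Sum>k<K. w y k * (2 * B)) = 2 * B * Q y"
          by (simp add: Q_def w_def sum_distrib_left sum_distrib_right ac_simps)
        have Qnn: "Q y \<ge> 0"
        proof -
          have "Q y = (\<Sum>k<K. w y k)" by (simp add: Q_def w_def sum_distrib_left)
          then show ?thesis using w_nonneg[OF y(1) yN] by (simp add: sum_nonneg)
        qed
        have "2 * B * Q y \<le> 2 * B * r" using Qy B0 Qnn by (intro mult_left_mono) auto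
        also have "2 * B * r < e / 2"
        proof -
          have "2 * B * r = (e / 2) * (2 * B / (2 * B + 1))" using B0 by (simp add: r_def field_simps)
          also have "\<dots> < e / 2" using e B0 by (simp add: field_simps)
          finally show ?thesis .
        qed
        finally have "2 * B * Q y < e / 2" .
        then show "dist (qMKZ x1 xN q n f y) (f xN) < e"
          using le1 le2 sQ by (simp add: dist_real_def abs_less_iff)
      qed
    qed
    then show ?thesis using True by (simp add: continuous_within M_xN)
  qed
  then show ?thesis using continuous_on_eq_continuous_within by blast
qed

end


lemma sup_le:
  fixes h :: "real \<Rightarrow> real"
  assumes "continuous_on {c..d} h" "x \<in> {c..d}"
  shows "\<bar>h x\<bar> \<le> (SUP z\<in>{c..d}. \<bar>h z\<bar>)"
proof -
  have "bdd_above ((\<lambda>z. \<bar>h z\<bar>) ` {c..d})"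
    by (intro bounded_imp_bdd_above compact_imp_bounded compact_continuous_image continuous_intros assms(1) compact_Icc)
  then show ?thesis using assms(2) by (rule cSUP_upper2) simp
qed

locale frac =
  fixes xs :: "nat \<Rightarrow> real" and N :: nat and a b :: "nat \<Rightarrow> real"
    and \<alpha> :: "nat \<Rightarrow> real \<Rightarrow> real" and q :: real and n :: nat
  assumes N: "N \<ge> 2"
    and part: "\<And>i. 1 \<le> i \<Longrightarrow> i < N \<Longrightarrow> xs i < xs (Suc i)"
    and ul: "\<And>i. i \<in> {1..N-1} \<Longrightarrow> a i * xs 1 + b i = xs i"
    and ur: "\<And>i. i \<in> {1..N-1} \<Longrightarrow> a i * xs N + b i = xs (Suc i)"
    and acont: "\<And>i. i \<in> {1..N-1} \<Longrightarrow> continuous_on {xs 1..xs N} (\<alpha> i)"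
    and anorm: "Max ((\<lambda>i. SUP y\<in>{xs 1..xs N}. \<bar>\<alpha> i y\<bar>) ` {1..N-1}) < 1"
    and q0: "0 < q" and q1: "q \<le> 1" and n1: "n \<ge> 1"
begin

lemma xs_mono: assumes "1 \<le> i" "i \<le> j" "j \<le> N" shows "xs i \<le> xs j"
  using assms(2,3)
proof (induction j rule: dec_induct)
  case (step j)
  then show ?case using part[of j] assms(1) by force
qed simp

lemma lt: "xs 1 < xs N"
proof -
  have "xs 1 < xs (Suc 1)" using part[of 1] N by simp
  moreover have "xs (Suc 1) \<le> xs N" using xs_mono[of "Suc 1" N] N by simp
  ultimately show ?thesis by simp
qed

sublocale mkz "xs 1" "xs N" q n
  using lt q0 q1 n1 by unfold_locales auto

abbreviation "I \<equiv> {xs 1..xs N}"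
abbreviation "M \<equiv> qMKZ (xs 1) (xs N) q n"

lemma a_pos: assumes i: "i \<in> {1..N-1}" shows "a i > 0"
proof -
  have "a i * (xs N - xs 1) = xs (Suc i) - xs i" using ul[OF i] ur[OF i] by (simp add: algebra_simps)
  moreover have "xs (Suc i) - xs i > 0" using part[of i] i by auto
  ultimately have "a i * (xs N - xs 1) > 0" by simp
  then show ?thesis using lt by (simp add: zero_less_mult_iff)
qed

lemma piece_sub: "i \<in> {1..N-1} \<Longrightarrow> {xs i..xs (Suc i)} \<subseteq> I"
  using xs_mono[of 1 i] xs_mono[of "Suc i" N] by auto

lemma u_in: assumes i: "i \<in> {1..N-1}" and y: "y \<in> I" shows "a i * y + b i \<in> {xs i..xs (Suc i)}"
proof -
  have "a i * xs 1 \<le> a i * y" "a i * y \<le> a i * xs N" using a_pos[OF i] y by auto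
  then show ?thesis using ul[OF i] ur[OF i] by auto
qed

lemma inv_in: assumes i: "i \<in> {1..N-1}" and z: "z \<in> {xs i..xs (Suc i)}" shows "(z - b i) / a i \<in> I"
proof -
  have a: "a i > 0" by (rule a_pos[OF i])
  have "a i * xs 1 \<le> z - b i" "z - b i \<le> a i * xs N" using ul[OF i] ur[OF i] z by auto
  then show ?thesis using a by (simp add: le_divide_eq divide_le_eq mult.commute)
qed

lemma inv_eq: assumes i: "i \<in> {1..N-1}" shows "a i * ((z - b i) / a i) + b i = z"
  using a_pos[OF i] by simp

definition "idx z = (LEAST i. 1 \<le> i \<and> z \<le> xs (Suc i))"

lemma idx_props: assumes z: "z \<in> I" shows "idx z \<in> {1..N-1}" "z \<in> {xs (idx z)..xs (Suc (idx z))}"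
proof -
  let ?P = "\<lambda>i. 1 \<le> i \<and> z \<le> xs (Suc i)"
  have PN: "?P (N - 1)" using N z by (auto simp: Suc_diff_le)
  have P: "?P (idx z)" unfolding idx_def by (rule LeastI[of ?P, OF PN])
  have le: "idx z \<le> N - 1" unfolding idx_def by (rule Least_le[of ?P, OF PN])
  show "idx z \<in> {1..N-1}" using P le by auto
  have "xs (idx z) \<le> z"
  proof (cases "idx z = 1")
    case True then show ?thesis using z by simp
  next
    case False
    then have "idx z - 1 < idx z" "1 \<le> idx z - 1" using P by auto
    then have "\<not> ?P (idx z - 1)" unfolding idx_def by (intro not_less_Least[of _ ?P]) auto
    then show ?thesis using \<open>1 \<le> idx z - 1\<close> by (simp add: Suc_diff_1)
  qed
  then show "z \<in> {xs (idx z)..xs (Suc (idx z))}" using P by auto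
qed

lemma idx_le: "i \<in> {1..N-1} \<Longrightarrow> z \<le> xs (Suc i) \<Longrightarrow> idx z \<le> i"
  unfolding idx_def by (rule Least_le) auto

definition "yv z = (z - b (idx z)) / a (idx z)"

definition "T0 f g z = f z + \<alpha> (idx z) (yv z) * (g (yv z) - M f (yv z))"

lemma yv_in: "z \<in> I \<Longrightarrow> yv z \<in> I"
  unfolding yv_def using inv_in idx_props by blast

lemma yv_eq: "z \<in> I \<Longrightarrow> a (idx z) * yv z + b (idx z) = z"
  unfolding yv_def using inv_eq idx_props by blast

lemma inv_x1: "i \<in> {1..N-1} \<Longrightarrow> (xs i - b i) / a i = xs 1"
  using ul[of i] a_pos[of i] by (auto simp: field_simps)

lemma inv_xN: "i \<in> {1..N-1} \<Longrightarrow> (xs (Suc i) - b i) / a i = xs N"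
  using ur[of i] a_pos[of i] by (auto simp: field_simps)

lemma T0_piece:
  assumes g1: "g (xs 1) = f (xs 1)" and gN: "g (xs N) = f (xs N)"
    and i: "i \<in> {1..N-1}" and z: "z \<in> {xs i..xs (Suc i)}"
  shows "T0 f g z = f z + \<alpha> i ((z - b i) / a i) * (g ((z - b i) / a i) - M f ((z - b i) / a i))"
proof -
  have zI: "z \<in> I" using piece_sub[OF i] z by blast
  define j where "j = idx z"
  have j: "j \<in> {1..N-1}" "z \<in> {xs j..xs (Suc j)}" using idx_props[OF zI] by (auto simp: j_def)
  have ji: "j \<le> i" using idx_le[OF i, of z] z by (auto simp: j_def)
  show ?thesis
  proof (cases "j = i")
    case True then show ?thesis by (simp add: T0_def yv_def j_def)
  next
    case False
    then have "Suc j \<le> i" using ji by simp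
    then have "xs (Suc j) \<le> xs i" using xs_mono[of "Suc j" i] i by auto
    then have zj: "z = xs (Suc j)" "z = xs i" using j z by auto
    have yN: "yv z = xs N" unfolding yv_def j_def[symmetric] using inv_xN[OF j(1)] zj by simp
    have y1: "(z - b i) / a i = xs 1" using inv_x1[OF i] zj by simp
    have "T0 f g z = f z" unfolding T0_def yN using gN M_xN[of f] by simp
    moreover have "f z + \<alpha> i ((z - b i) / a i) * (g ((z - b i) / a i) - M f ((z - b i) / a i)) = f z"
      unfolding y1 using g1 M_x1[of f] by simp
    ultimately show ?thesis by simp
  qed
qed

lemma I_union: "I = (\<Union>i\<in>{1..N-1}. {xs i..xs (Suc i)})"
  using piece_sub idx_props by blast

lemma T0_cont:
  assumes f: "continuous_on I f" and g: "continuous_on I g"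
    and g1: "g (xs 1) = f (xs 1)" and gN: "g (xs N) = f (xs N)"
  shows "continuous_on I (T0 f g)"
proof -
  have "continuous_on (\<Union>i\<in>{1..N-1}. {xs i..xs (Suc i)}) (T0 f g)"
  proof (rule continuous_on_closed_Union)
    fix i assume i: "i \<in> {1..N-1}"
    let ?v = "\<lambda>z. (z - b i) / a i"
    have cv: "continuous_on {xs i..xs (Suc i)} ?v" by (intro continuous_intros) (use a_pos[OF i] in auto)
    have im: "?v ` {xs i..xs (Suc i)} \<subseteq> I" using inv_in[OF i] by blast
    have "continuous_on {xs i..xs (Suc i)} (\<lambda>z. f z + \<alpha> i (?v z) * (g (?v z) - M f (?v z)))"
      by (intro continuous_intros continuous_on_subset[OF f piece_sub[OF i]]
          continuous_on_compose2[OF acont[OF i] cv im] continuous_on_compose2[OF g cv im]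
          continuous_on_compose2[OF M_cont[OF f] cv im])
    then show "continuous_on {xs i..xs (Suc i)} (T0 f g)"
      by (rule continuous_on_cong[THEN iffD1, rotated 2]) (use T0_piece[OF g1 gN i] in auto)
  qed auto
  then show ?thesis using I_union by simp
qed

definition "am = Max ((\<lambda>i. SUP y\<in>{xs 1..xs N}. \<bar>\<alpha> i y\<bar>) ` {1..N-1})"

lemma alpha_le: assumes i: "i \<in> {1..N-1}" and y: "y \<in> I" shows "\<bar>\<alpha> i y\<bar> \<le> am"
proof -
  have "\<bar>\<alpha> i y\<bar> \<le> (SUP y\<in>{xs 1..xs N}. \<bar>\<alpha> i y\<bar>)" by (rule sup_le[OF acont[OF i] y])
  also have "\<dots> \<le> am" unfolding am_def using i by (intro Max_ge) auto
  finally show ?thesis .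
qed

lemma am: "0 \<le> am" "am < 1"
proof -
  have "1 \<in> {1..N-1}" using N by auto
  then show "0 \<le> am" using alpha_le[of 1 "xs 1"] lt by (meson abs_ge_zero atLeastAtMost_iff less_imp_le order_refl order_trans)
  show "am < 1" using anorm by (simp add: am_def)
qed


definition "cl x = max (xs 1) (min (xs N) x)"

lemma cl_in: "cl x \<in> I" using lt by (auto simp: cl_def)
lemma cl_id: "z \<in> I \<Longrightarrow> cl z = z" by (auto simp: cl_def)
lemma cl_cont: "continuous_on UNIV cl" unfolding cl_def[abs_def] by (intro continuous_intros)

lemma inbc: assumes h: "continuous_on I h" shows "(\<lambda>x. h (cl x)) \<in> bcontfun"
proof -
  have im: "cl ` UNIV \<subseteq> I" using cl_in by blast
  have "continuous_on UNIV (\<lambda>x. h (cl x))" by (rule continuous_on_compose2[OF h cl_cont im])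
  moreover have "bounded (range (\<lambda>x. h (cl x)))"
    by (rule bounded_subset[OF compact_imp_bounded[OF compact_continuous_image[OF h compact_Icc]]])
      (use cl_in in blast)
  ultimately show ?thesis by (simp add: bcontfun_def)
qed

lemma eval_cont: "continuous_on UNIV (\<lambda>G::real \<Rightarrow>\<^sub>C real. apply_bcontfun G x)"
  unfolding continuous_on_iff
proof (intro ballI allI impI)
  fix G :: "real \<Rightarrow>\<^sub>C real" and e :: real assume e: "e > 0"
  show "\<exists>d>0. \<forall>G'\<in>UNIV. dist G' G < d \<longrightarrow> dist (apply_bcontfun G' x) (apply_bcontfun G x) < e"
    using e dist_bounded le_less_trans by blast
qed

lemma one_in: "1 \<in> {1..N-1}" using N by auto
lemma Nm1_in: "N - 1 \<in> {1..N-1}" using N by auto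

lemma T0_x1: assumes "g (xs 1) = f (xs 1)" "g (xs N) = f (xs N)" shows "T0 f g (xs 1) = f (xs 1)"
proof -
  have "xs 1 \<in> {xs 1..xs (Suc 1)}" using lt xs_mono[of 1 "Suc 1"] N by auto
  then show ?thesis using T0_piece[OF assms one_in, of "xs 1"] inv_x1[OF one_in] assms M_x1[of f] by simp
qed

lemma T0_xN: assumes "g (xs 1) = f (xs 1)" "g (xs N) = f (xs N)" shows "T0 f g (xs N) = f (xs N)"
proof -
  have SN: "Suc (N - 1) = N" using N by simp
  have "xs N \<in> {xs (N - 1)..xs (Suc (N - 1))}" using xs_mono[of "N - 1" N] N SN by auto
  then show ?thesis using T0_piece[OF assms Nm1_in, of "xs N"] inv_xN[OF Nm1_in] assms M_xN[of f] SN by simp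
qed

lemma exists:
  assumes f: "continuous_on I f"
  shows "\<exists>g. is_qMKZ_fractal xs N (\<lambda>i y. a i * y + b i) \<alpha> q n f g"
proof -
  define S where "S = {G :: real \<Rightarrow>\<^sub>C real. apply_bcontfun G (xs 1) = f (xs 1) \<and> apply_bcontfun G (xs N) = f (xs N)}"
  define TT where "TT G = Bcontfun (\<lambda>x. T0 f (apply_bcontfun G) (cl x))" for G
  have TT_app: "apply_bcontfun (TT G) = (\<lambda>x. T0 f (apply_bcontfun G) (cl x))" if G: "G \<in> S" for G
    unfolding TT_def
    by (rule Bcontfun_inverse[OF inbc[OF T0_cont[OF f continuous_on_apply_bcontfun]]]) (use G in \<open>auto simp: S_def\<close>)
  have "closed S"
  proof -
    have "S = {G. apply_bcontfun G (xs 1) = (\<lambda>_. f (xs 1)) G} \<inter> {G. apply_bcontfun G (xs N) = (\<lambda>_. f (xs N)) G}"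
      by (auto simp: S_def)
    also have "closed \<dots>"
      by (intro closed_Int closed_Collect_eq eval_cont continuous_on_const)
    finally show ?thesis .
  qed
  then have cS: "complete S" by (simp add: complete_eq_closed)
  have ne: "S \<noteq> {}"
  proof -
    have "Bcontfun (\<lambda>x. f (cl x)) \<in> S"
      using Bcontfun_inverse[OF inbc[OF f]] cl_id lt by (simp add: S_def)
    then show ?thesis by blast
  qed
  have im: "TT ` S \<subseteq> S"
  proof
    fix H assume "H \<in> TT ` S"
    then obtain G where G: "G \<in> S" "H = TT G" by blast
    then have g: "apply_bcontfun G (xs 1) = f (xs 1)" "apply_bcontfun G (xs N) = f (xs N)" by (auto simp: S_def)
    show "H \<in> S" using TT_app[OF G(1)] G(2) cl_id lt T0_x1[OF g] T0_xN[OF g] by (simp add: S_def)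
  qed
  have lip: "dist (TT G) (TT H) \<le> am * dist G H" if G: "G \<in> S" and H: "H \<in> S" for G H
  proof (rule dist_bound)
    fix x
    define z where "z = cl x"
    have z: "z \<in> I" using cl_in by (simp add: z_def)
    have "dist (TT G x) (TT H x) = \<bar>\<alpha> (idx z) (yv z)\<bar> * dist (G (yv z)) (H (yv z))"
      by (simp add: TT_app[OF G] TT_app[OF H] z_def[symmetric] T0_def dist_real_def abs_mult[symmetric] algebra_simps)
    also have "\<dots> \<le> am * dist G H"
      by (intro mult_mono alpha_le idx_props z yv_in dist_bounded) (use am in auto)
    finally show "dist (TT G x) (TT H x) \<le> am * dist G H" .
  qed
  obtain G where G: "G \<in> S" "TT G = G"
    using Banach_fix[OF cS ne am im lip] by blast
  define g where "g x = (if x \<in> I then apply_bcontfun G x else 0)" for x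
  have "is_qMKZ_fractal xs N (\<lambda>i y. a i * y + b i) \<alpha> q n f g"
    unfolding is_qMKZ_fractal_def
  proof (intro conjI allI impI ballI)
    show "continuous_on I g"
      by (rule continuous_on_eq[OF continuous_on_apply_bcontfun[of I G]]) (simp add: g_def)
    show "g y = 0" if "y \<notin> I" for y using that by (simp only: g_def if_False)
    fix i y assume i: "i \<in> {1..N-1}" and y: "y \<in> I"
    define z where "z = a i * y + b i"
    have zp: "z \<in> {xs i..xs (Suc i)}" using u_in[OF i y] by (simp add: z_def)
    have zI: "z \<in> I" using piece_sub[OF i] zp by blast
    have yz: "(z - b i) / a i = y" using a_pos[OF i] by (simp add: z_def)
    have g1: "apply_bcontfun G (xs 1) = f (xs 1)" "apply_bcontfun G (xs N) = f (xs N)" using G(1) by (auto simp: S_def)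
    have "g z = apply_bcontfun (TT G) z" using G(2) zI by (simp add: g_def)
    also have "\<dots> = T0 f G z" using TT_app[OF G(1)] cl_id[OF zI] by simp
    also have "\<dots> = f z + \<alpha> i y * (g y - M f y)"
      using T0_piece[OF g1 i zp] yz y by (simp add: g_def)
    finally show "g (a i * y + b i) = f (a i * y + b i) + \<alpha> i y * (g y - M f y)" by (simp add: z_def)
  qed
  then show ?thesis by blast
qed

lemma unique:
  assumes g1: "is_qMKZ_fractal xs N (\<lambda>i y. a i * y + b i) \<alpha> q n f g1"
    and g2: "is_qMKZ_fractal xs N (\<lambda>i y. a i * y + b i) \<alpha> q n f g2"
  shows "g1 = g2"
proof -
  define h where "h x = g1 x - g2 x" for x
  have ch: "continuous_on I h" using g1 g2 unfolding h_def is_qMKZ_fractal_def by (intro continuous_intros) auto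
  define Sh where "Sh = (SUP z\<in>I. \<bar>h z\<bar>)"
  have hx: "\<bar>h x\<bar> \<le> am * Sh" if x: "x \<in> I" for x
  proof -
    define i where "i = idx x"
    define y where "y = yv x"
    have i: "i \<in> {1..N-1}" using idx_props[OF x] by (simp add: i_def)
    have y: "y \<in> I" using yv_in[OF x] by (simp add: y_def)
    have xe: "a i * y + b i = x" using yv_eq[OF x] by (simp add: i_def y_def)
    have e1: "g1 (a i * y + b i) = f (a i * y + b i) + \<alpha> i y * (g1 y - M f y)"
      using g1 i y unfolding is_qMKZ_fractal_def by blast
    have e2: "g2 (a i * y + b i) = f (a i * y + b i) + \<alpha> i y * (g2 y - M f y)"
      using g2 i y unfolding is_qMKZ_fractal_def by blast
    have "h x = g1 (a i * y + b i) - g2 (a i * y + b i)" using xe by (simp add: h_def)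
    also have "\<dots> = \<alpha> i y * h y" unfolding e1 e2 h_def by (simp add: algebra_simps)
    finally have "h x = \<alpha> i y * h y" .
    then have "\<bar>h x\<bar> = \<bar>\<alpha> i y\<bar> * \<bar>h y\<bar>" by (simp add: abs_mult)
    also have "\<dots> \<le> am * Sh" unfolding Sh_def
      by (intro mult_mono alpha_le i y sup_le[OF ch y]) (use am in auto)
    finally show ?thesis .
  qed
  have "Sh \<le> am * Sh" unfolding Sh_def by (rule cSUP_least) (use lt hx Sh_def in auto)
  moreover have "0 \<le> Sh" unfolding Sh_def by (rule order_trans[OF abs_ge_zero sup_le[OF ch, of "xs 1"]]) (use lt in auto)
  ultimately have Sh0: "Sh = 0"
  proof -
    assume a1: "Sh \<le> am * Sh" and a2: "0 \<le> Sh"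
    have "(1 - am) * Sh \<le> 0" using a1 by (simp add: algebra_simps)
    moreover have "1 - am > 0" using am by simp
    ultimately have "Sh \<le> 0" by (simp add: mult_le_0_iff)
    then show ?thesis using a2 by simp
  qed
  have hz: "g1 x = g2 x" if "x \<in> I" for x using hx[OF that] unfolding Sh0 h_def by simp
  have "g1 x = g2 x" for x
  proof (cases "x \<in> I")
    case True then show ?thesis by (rule hz)
  next
    case False then show ?thesis using g1 g2 unfolding is_qMKZ_fractal_def by simp
  qed
  then show ?thesis by blast
qed

abbreviation "FF \<equiv> qMKZ_fractal xs N (\<lambda>i y. a i * y + b i) \<alpha> q n"

lemma FF_spec: assumes f: "continuous_on I f" shows "is_qMKZ_fractal xs N (\<lambda>i y. a i * y + b i) \<alpha> q n f (FF f)"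
proof -
  obtain g where g: "is_qMKZ_fractal xs N (\<lambda>i y. a i * y + b i) \<alpha> q n f g" using exists[OF f] by blast
  show ?thesis unfolding qMKZ_fractal_def by (rule theI[of "\<lambda>g. is_qMKZ_fractal xs N (\<lambda>i y. a i * y + b i) \<alpha> q n f g" g, OF g]) (erule unique[OF _ g])
qed

lemma FF_eq: "continuous_on I f \<Longrightarrow> is_qMKZ_fractal xs N (\<lambda>i y. a i * y + b i) \<alpha> q n f g \<Longrightarrow> FF f = g"
  using unique FF_spec by blast


lemma bnd: fixes f :: "real \<Rightarrow> real" assumes "continuous_on I f" shows "\<forall>y\<in>I. \<bar>f y\<bar> \<le> (SUP z\<in>I. \<bar>f z\<bar>)"
  using sup_le[OF assms] by blast

lemma frac_eq: "is_qMKZ_fractal xs N (\<lambda>i y. a i * y + b i) \<alpha> q n f g \<Longrightarrow> i \<in> {1..N-1} \<Longrightarrow> y \<in> I \<Longrightarrow>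
   g (a i * y + b i) = f (a i * y + b i) + \<alpha> i y * (g y - M f y)"
  unfolding is_qMKZ_fractal_def by blast

lemma frac_cont: "is_qMKZ_fractal xs N (\<lambda>i y. a i * y + b i) \<alpha> q n f g \<Longrightarrow> continuous_on I g"
  unfolding is_qMKZ_fractal_def by blast

lemma frac_out: "is_qMKZ_fractal xs N (\<lambda>i y. a i * y + b i) \<alpha> q n f g \<Longrightarrow> y \<notin> I \<Longrightarrow> g y = 0"
  unfolding is_qMKZ_fractal_def by blast

lemma FF_add:
  assumes f: "continuous_on I f" and g: "continuous_on I g"
  shows "FF (\<lambda>y. f y + g y) = (\<lambda>y. FF f y + FF g y)"
proof (rule FF_eq)
  show "continuous_on I (\<lambda>y. f y + g y)" using f g by (intro continuous_intros)
  have sf: "is_qMKZ_fractal xs N (\<lambda>i y. a i * y + b i) \<alpha> q n f (FF f)" by (rule FF_spec[OF f])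
  have sg: "is_qMKZ_fractal xs N (\<lambda>i y. a i * y + b i) \<alpha> q n g (FF g)" by (rule FF_spec[OF g])
  show "is_qMKZ_fractal xs N (\<lambda>i y. a i * y + b i) \<alpha> q n (\<lambda>y. f y + g y) (\<lambda>y. FF f y + FF g y)"
    unfolding is_qMKZ_fractal_def
  proof (intro conjI allI impI ballI)
    show "continuous_on I (\<lambda>y. FF f y + FF g y)"
      using frac_cont[OF sf] frac_cont[OF sg] by (intro continuous_intros)
    show "FF f y + FF g y = 0" if "y \<notin> I" for y using frac_out[OF sf that] frac_out[OF sg that] by simp
    fix i y assume i: "i \<in> {1..N-1}" and y: "y \<in> I"
    have "M (\<lambda>y. f y + g y) y = M f y + M g y" by (rule M_add[OF bnd[OF f] bnd[OF g] y])
    then show "FF f (a i * y + b i) + FF g (a i * y + b i) =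
      f (a i * y + b i) + g (a i * y + b i) + \<alpha> i y * (FF f y + FF g y - M (\<lambda>y. f y + g y) y)"
      using frac_eq[OF sf i y] frac_eq[OF sg i y] by (simp add: algebra_simps)
  qed
qed

lemma FF_cmult:
  assumes f: "continuous_on I f"
  shows "FF (\<lambda>y. c * f y) = (\<lambda>y. c * FF f y)"
proof (rule FF_eq)
  show "continuous_on I (\<lambda>y. c * f y)" using f by (intro continuous_intros)
  have sf: "is_qMKZ_fractal xs N (\<lambda>i y. a i * y + b i) \<alpha> q n f (FF f)" by (rule FF_spec[OF f])
  show "is_qMKZ_fractal xs N (\<lambda>i y. a i * y + b i) \<alpha> q n (\<lambda>y. c * f y) (\<lambda>y. c * FF f y)"
    unfolding is_qMKZ_fractal_def
  proof (intro conjI allI impI ballI)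
    show "continuous_on I (\<lambda>y. c * FF f y)"
      using frac_cont[OF sf] by (intro continuous_intros)
    show "c * FF f y = 0" if "y \<notin> I" for y using frac_out[OF sf that] by simp
    fix i y assume i: "i \<in> {1..N-1}" and y: "y \<in> I"
    have Mc: "M (\<lambda>y. c * f y) y = c * M f y" by (rule M_cmult[OF bnd[OF f] y])
    show "c * FF f (a i * y + b i) =
      c * f (a i * y + b i) + \<alpha> i y * (c * FF f y - M (\<lambda>y. c * f y) y)"
      by (subst frac_eq[OF sf i y], subst Mc) (simp add: algebra_simps)
  qed
qed

lemma FF_bound:
  assumes f: "continuous_on I f" and x: "x \<in> I"
  shows "\<bar>FF f x\<bar> \<le> (1 + am) / (1 - am) * (SUP z\<in>I. \<bar>f z\<bar>)"
proof -
  have sf: "is_qMKZ_fractal xs N (\<lambda>i y. a i * y + b i) \<alpha> q n f (FF f)" by (rule FF_spec[OF f])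
  define Sf where "Sf = (SUP z\<in>I. \<bar>f z\<bar>)"
  define Sg where "Sg = (SUP z\<in>I. \<bar>FF f z\<bar>)"
  have cg: "continuous_on I (FF f)" by (rule frac_cont[OF sf])
  have px: "\<bar>FF f x\<bar> \<le> Sf + am * (Sg + Sf)" if x: "x \<in> I" for x
  proof -
    define i where "i = idx x"
    define y where "y = yv x"
    have i: "i \<in> {1..N-1}" using idx_props[OF x] by (simp add: i_def)
    have y: "y \<in> I" using yv_in[OF x] by (simp add: y_def)
    have xe: "a i * y + b i = x" using yv_eq[OF x] by (simp add: i_def y_def)
    have e: "FF f x = f x + \<alpha> i y * (FF f y - M f y)" using frac_eq[OF sf i y] xe by simp
    have "\<bar>FF f x\<bar> \<le> \<bar>f x\<bar> + \<bar>\<alpha> i y\<bar> * \<bar>FF f y - M f y\<bar>"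
      unfolding e abs_mult[symmetric] by (rule abs_triangle_ineq)
    also have "\<dots> \<le> Sf + am * (Sg + Sf)"
    proof (intro add_mono mult_mono)
      show "\<bar>f x\<bar> \<le> Sf" unfolding Sf_def by (rule sup_le[OF f x])
      show "\<bar>\<alpha> i y\<bar> \<le> am" by (rule alpha_le[OF i y])
      have "\<bar>FF f y - M f y\<bar> \<le> \<bar>FF f y\<bar> + \<bar>M f y\<bar>" by (rule abs_triangle_ineq4)
      also have "\<dots> \<le> Sg + Sf" unfolding Sg_def Sf_def
        by (intro add_mono sup_le[OF cg y] M_bound[OF bnd[OF f] y])
      finally show "\<bar>FF f y - M f y\<bar> \<le> Sg + Sf" .
    qed (use am in auto)
    finally show ?thesis .
  qed
  have "(SUP z\<in>I. \<bar>FF f z\<bar>) \<le> Sf + am * (Sg + Sf)" by (rule cSUP_least) (use lt px in auto)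
  then have "Sg \<le> Sf + am * (Sg + Sf)" by (simp only: Sg_def[symmetric])
  then have "(1 - am) * Sg \<le> (1 + am) * Sf" by (simp add: algebra_simps)
  then have "Sg \<le> (1 + am) / (1 - am) * Sf" using am by (simp add: field_simps)
  moreover have "\<bar>FF f x\<bar> \<le> Sg" unfolding Sg_def by (rule sup_le[OF cg x])
  ultimately show ?thesis by (simp add: Sf_def)
qed

lemma main:
  "(\<forall>f. continuous_on I f \<longrightarrow> continuous_on I (FF f))
   \<and> (\<forall>f g c. continuous_on I f \<longrightarrow> continuous_on I g \<longrightarrow>
        FF (\<lambda>y. f y + g y) = (\<lambda>y. FF f y + FF g y) \<and> FF (\<lambda>y. c * f y) = (\<lambda>y. c * FF f y))
   \<and> (\<exists>C\<ge>0. \<forall>f. continuous_on I f \<longrightarrow> (\<forall>y\<in>I. \<bar>FF f y\<bar> \<le> C * (SUP z\<in>I. \<bar>f z\<bar>)))"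
proof (intro conjI allI impI)
  show "continuous_on I (FF f)" if "continuous_on I f" for f by (rule frac_cont[OF FF_spec[OF that]])
  show "FF (\<lambda>y. f y + g y) = (\<lambda>y. FF f y + FF g y)" if "continuous_on I f" "continuous_on I g" for f g
    by (rule FF_add[OF that])
  show "FF (\<lambda>y. c * f y) = (\<lambda>y. c * FF f y)" if "continuous_on I f" for f c
    by (rule FF_cmult[OF that])
  show "\<exists>C\<ge>0. \<forall>f. continuous_on I f \<longrightarrow> (\<forall>y\<in>I. \<bar>FF f y\<bar> \<le> C * (SUP z\<in>I. \<bar>f z\<bar>))"
    using FF_bound am by (intro exI[of _ "(1 + am) / (1 - am)"]) auto
qed

end

theorem theorem3p2:
  fixes xs :: "nat \<Rightarrow> real" and N :: nat and a b :: "nat \<Rightarrow> real"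
    and \<alpha> :: "nat \<Rightarrow> real \<Rightarrow> real" and q :: real and n :: nat
  defines "I \<equiv> {xs 1..xs N}"
  defines "u \<equiv> (\<lambda>i y. a i * y + b i)"
  defines "F \<equiv> qMKZ_fractal xs N u \<alpha> q n"
  assumes N: "N \<ge> 2"
    and part: "\<And>i. 1 \<le> i \<Longrightarrow> i < N \<Longrightarrow> xs i < xs (Suc i)"
    and u_left: "\<And>i. i \<in> {1..N-1} \<Longrightarrow> u i (xs 1) = xs i"
    and u_right: "\<And>i. i \<in> {1..N-1} \<Longrightarrow> u i (xs N) = xs (Suc i)"
    and \<alpha>_cont: "\<And>i. i \<in> {1..N-1} \<Longrightarrow> continuous_on I (\<alpha> i)"
    and \<alpha>_norm: "Max ((\<lambda>i. SUP y\<in>I. \<bar>\<alpha> i y\<bar>) ` {1..N-1}) < 1"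
    and q: "0 < q" "q \<le> 1"
    and n: "n \<ge> 1"
  shows "(\<forall>f. continuous_on I f \<longrightarrow> continuous_on I (F f))
       \<and> (\<forall>f g c. continuous_on I f \<longrightarrow> continuous_on I g \<longrightarrow>
            F (\<lambda>y. f y + g y) = (\<lambda>y. F f y + F g y) \<and> F (\<lambda>y. c * f y) = (\<lambda>y. c * F f y))
       \<and> (\<exists>C\<ge>0. \<forall>f. continuous_on I f \<longrightarrow>
            (\<forall>y\<in>I. \<bar>F f y\<bar> \<le> C * (SUP z\<in>I. \<bar>f z\<bar>)))"
proof -
  have loc: "frac xs N a b \<alpha> q n"
    unfolding frac_def using N part u_left u_right \<alpha>_cont \<alpha>_norm q n
    by (auto simp: u_def I_def)
  interpret frac xs N a b \<alpha> q n by (rule loc)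
  show ?thesis unfolding F_def u_def I_def by (rule main)
qed

end
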